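(* In the setting described in the context, $\displaystyle\sum_{i=0}^{t-1}w_i^2=\frac{q^2+(t+1)q+1}{t}$.
   Context: Let $q=p^h$ with $p$ prime, $h\ge1$. Let $\alpha$ be a primitive element of $\mathbb{F}_{q^3}$; the points of $PG(2,q)$ are the 1-dimensional $\mathbb{F}_q$-subspaces of $\mathbb{F}_{q^3}$, and $P_i$ denotes the point represented by $\alpha^i$, so $PG(2,q)=\{P_0,\dots,P_{q^2+q}\}$. Let $\tau:P_i\mapsto P_{ip\bmod(q^2+q+1)}$ (a collineation) and let $\ell_0$ be a line of $PG(2,q)$ fixed by $\tau$. Let $t$ be a positive divisor of $q^2+q+1$ and for $i=0,\dots,t-1$ let $O_i=\{P_u:u\equiv i\pmod t\}$. For $u=0,\dots,t-1$ let $w_u=|\ell_0\cap O_u|$. *)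

theory Defs
  imports Complex_Main "HOL-Computational_Algebra.Primes"
begin

(* The subfield F_q of a field of order q^3: its unique subfield of order q. *)
definition subfield_Fq :: "nat \<Rightarrow> 'a::field set" where
  "subfield_Fq q = {x. x ^ q = x}"

definition primitive_elem :: "'a::field \<Rightarrow> bool" where
  "primitive_elem \<alpha> \<longleftrightarrow> (\<forall>x. x \<noteq> 0 \<longrightarrow> (\<exists>n::nat. x = \<alpha> ^ n))"

(* the point P_i: the 1-dimensional F_q-subspace spanned by alpha^i *)
definition proj_point :: "nat \<Rightarrow> 'a::field \<Rightarrow> nat \<Rightarrow> 'a set" where
  "proj_point q \<alpha> i = {c * \<alpha> ^ i | c. c \<in> subfield_Fq q}"

(* A line of PG(2,q), given as the set of indices k in {0..q^2+q} of the points
   P_k it contains: the points of the F_q-span of two distinct points P_i, P_j. *)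
definition is_line :: "nat \<Rightarrow> 'a::field \<Rightarrow> nat set \<Rightarrow> bool" where
  "is_line q \<alpha> L \<longleftrightarrow>
     (\<exists>i j. i < q^2+q+1 \<and> j < q^2+q+1 \<and> proj_point q \<alpha> i \<noteq> proj_point q \<alpha> j \<and>
        L = {k. k < q^2+q+1 \<and>
               (\<exists>a \<in> subfield_Fq q. \<exists>b \<in> subfield_Fq q. \<alpha> ^ k = a * \<alpha> ^ i + b * \<alpha> ^ j)})"

definition tau_idx :: "nat \<Rightarrow> nat \<Rightarrow> nat \<Rightarrow> nat" where
  "tau_idx p q i = (i * p) mod (q^2+q+1)"

end

theory Submission
  imports Defs "HOL-Number_Theory.Residues"
begin


locale singer =
  fixes p h q :: nat and \<alpha> :: "'a::{field,finite}"
  assumes prime_p: "prime p" and h1: "h \<ge> 1" and qdef: "q = p^h"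
    and cardU: "card (UNIV::'a set) = q^3" and prim: "primitive_elem \<alpha>"
begin

abbreviation F :: "'a set" where "F \<equiv> subfield_Fq q"

lemma q_ge2: "q \<ge> 2"
proof -
  have "p \<ge> 2" by (rule prime_ge_2_nat[OF prime_p])
  moreover have "p \<le> p^h" using h1 \<open>p \<ge> 2\<close> by (intro self_le_power) auto
  ultimately show ?thesis using qdef by simp
qed

lemma q_pos: "q > 0" using q_ge2 by simp

lemma char_p: "CHAR('a) = p"
proof -
  have fin: "finite (UNIV::'a set)" by simp
  have "CHAR('a) > 0" by (rule finite_imp_CHAR_pos[OF fin])
  then have pc: "prime CHAR('a)" by (rule prime_CHAR_semidom)
  have "CHAR('a) dvd card (UNIV::'a set)" by (rule CHAR_dvd_CARD)
  then have "CHAR('a) dvd p^(h*3)" using cardU qdef by (simp add: power_mult)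
  then have "CHAR('a) dvd p" by (rule prime_dvd_power[OF pc])
  then show ?thesis using pc prime_p primes_dvd_imp_eq by blast
qed

lemma frob: "(x+y)^q = x^q + (y::'a)^q"
  by (rule freshmans_dream') (simp_all add: char_p prime_p qdef)

lemma neg_pow: "(-x)^q = -((x::'a)^q)"
proof -
  have "(x + -x)^q = x^q + (-x)^q" by (rule frob)
  moreover have "(0::'a)^q = 0" using q_pos by (simp add: power_0_left)
  ultimately have "x^q + (-x)^q = 0" by simp
  thus ?thesis by (metis add.commute neg_eq_iff_add_eq_0)
qed

lemma F_iff: "x \<in> F \<longleftrightarrow> x^q = x" by (simp add: subfield_Fq_def)
lemma F_0: "0 \<in> F" using q_pos by (simp add: F_iff)
lemma F_1: "1 \<in> F" by (simp add: F_iff)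
lemma F_add: "x \<in> F \<Longrightarrow> y \<in> F \<Longrightarrow> x + y \<in> F" by (simp add: F_iff frob)
lemma F_mult: "x \<in> F \<Longrightarrow> y \<in> F \<Longrightarrow> x * y \<in> F" by (simp add: F_iff power_mult_distrib)
lemma F_neg: "x \<in> F \<Longrightarrow> - x \<in> F" by (simp add: F_iff neg_pow)
lemma F_inv: "x \<in> F \<Longrightarrow> inverse x \<in> F" by (simp add: F_iff power_inverse)
lemma F_diff: "x \<in> F \<Longrightarrow> y \<in> F \<Longrightarrow> x - y \<in> F" unfolding diff_conv_add_uminus by (intro F_add F_neg)
lemma F_div: "x \<in> F \<Longrightarrow> y \<in> F \<Longrightarrow> x / y \<in> F" unfolding divide_inverse by (intro F_mult F_inv)

abbreviation M where "M \<equiv> q^3 - 1"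
abbreviation n where "n \<equiv> q^2 + q + 1"

lemma M_eq: "M = (q - 1) * n"
proof -
  have "q^3 = (q - 1) * n + 1" using q_pos
    by (cases q) (simp_all add: algebra_simps power2_eq_square power3_eq_cube)
  thus ?thesis by simp
qed

lemma M_pos: "M > 0" using M_eq q_ge2 by simp

lemma pow_card: assumes "x \<noteq> (0::'a)" shows "x^M = 1"
proof -
  let ?S = "UNIV - {0::'a}"
  have "(\<Prod>y\<in>?S. x*y) = (\<Prod>y\<in>?S. y)"
    by (rule prod.reindex_bij_witness[of _ "\<lambda>y. y/x" "\<lambda>y. x*y"]) (use assms in auto)
  moreover have "(\<Prod>y\<in>?S. x*y) = x^card ?S * \<Prod>?S" by (simp add: prod.distrib)
  moreover have "card ?S = M" using cardU by (simp add: card_Diff_singleton)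
  moreover have "\<Prod>?S \<noteq> 0" by (simp add: prod_zero_iff)
  ultimately show ?thesis by simp
qed

lemma alpha_nz: "\<alpha> \<noteq> 0"
proof
  assume a0: "\<alpha> = 0"
  have "UNIV \<subseteq> {0, 1::'a}"
  proof
    fix x :: 'a
    show "x \<in> {0,1}"
    proof (cases "x = 0")
      case False
      then obtain k where "x = \<alpha>^k" using prim unfolding primitive_elem_def by blast
      thus ?thesis using a0 by (cases k) auto
    qed simp
  qed
  hence "card (UNIV::'a set) \<le> 2" using card_mono[of "{0,1::'a}" UNIV] card_insert_le[of "{1::'a}" 0] by simp
  moreover have "q^3 \<ge> 2^3" using q_ge2 by (intro power_mono) auto
  ultimately show False using cardU by simp
qed

lemma pow_mod: "\<alpha>^m = \<alpha>^(m mod M)"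
proof -
  have "\<alpha>^m = \<alpha>^(M * (m div M) + m mod M)" by simp
  also have "\<dots> = (\<alpha>^M)^(m div M) * \<alpha>^(m mod M)" by (simp only: power_add power_mult)
  also have "\<dots> = \<alpha>^(m mod M)" using pow_card[OF alpha_nz] by simp
  finally show ?thesis .
qed

lemma alpha_eq: assumes "\<alpha>^a = \<alpha>^b" shows "a mod M = b mod M"
proof -
  have img: "(\<lambda>k. \<alpha>^k) ` {..<M} = UNIV - {0}"
  proof
    show "(\<lambda>k. \<alpha>^k) ` {..<M} \<subseteq> UNIV - {0}" using alpha_nz by auto
    show "UNIV - {0} \<subseteq> (\<lambda>k. \<alpha>^k) ` {..<M}"
    proof
      fix x assume "x \<in> UNIV - {0::'a}"
      then obtain k where "x = \<alpha>^k" using prim unfolding primitive_elem_def by blast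
      hence "x = \<alpha>^(k mod M)" using pow_mod by simp
      moreover have "k mod M < M" using M_pos by simp
      ultimately show "x \<in> (\<lambda>k. \<alpha>^k) ` {..<M}" by blast
    qed
  qed
  have "card ((\<lambda>k. \<alpha>^k) ` {..<M}) = card {..<M}"
    unfolding img using cardU by (simp add: card_Diff_singleton)
  hence inj: "inj_on (\<lambda>k. \<alpha>^k) {..<M}" by (intro eq_card_imp_inj_on) auto
  have "\<alpha>^(a mod M) = \<alpha>^a" by (rule pow_mod[symmetric])
  also have "\<dots> = \<alpha>^b" by (rule assms)
  also have "\<dots> = \<alpha>^(b mod M)" by (rule pow_mod)
  finally have "\<alpha>^(a mod M) = \<alpha>^(b mod M)" .
  thus ?thesis using inj M_pos by (auto dest: inj_onD)
qed

lemma mem_F_pow: "\<alpha>^m \<in> F \<longleftrightarrow> n dvd m"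
proof -
  have "\<alpha>^m \<in> F \<longleftrightarrow> \<alpha>^(m*q) = \<alpha>^m" by (simp add: F_iff power_mult)
  also have "\<dots> \<longleftrightarrow> (m*q) mod M = m mod M"
  proof
    assume "\<alpha>^(m*q) = \<alpha>^m" thus "(m*q) mod M = m mod M" by (rule alpha_eq)
  next
    assume h: "(m*q) mod M = m mod M"
    have "\<alpha>^(m*q) = \<alpha>^((m*q) mod M)" by (rule pow_mod)
    also have "\<dots> = \<alpha>^(m mod M)" by (simp only: h)
    also have "\<dots> = \<alpha>^m" by (rule pow_mod[symmetric])
    finally show "\<alpha>^(m*q) = \<alpha>^m" .
  qed
  also have "\<dots> \<longleftrightarrow> M dvd m*q - m" using q_pos by (intro mod_eq_dvd_iff_nat) simp
  also have "m*q - m = (q-1)*m" by (simp add: diff_mult_distrib2 mult.commute)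
  also have "M dvd (q-1)*m \<longleftrightarrow> (q-1)*n dvd (q-1)*m" by (simp only: M_eq)
  also have "\<dots> \<longleftrightarrow> n dvd m" using q_ge2 by (subst nat_mult_dvd_cancel_disj) auto
  finally show ?thesis .
qed

lemma n_dvd_M: "n dvd M" unfolding M_eq by (rule dvd_triv_right)

lemma samepoint: assumes "a < n" "b < n" "c \<in> F" "\<alpha>^a = c*\<alpha>^b" shows "a = b"
proof -
  have "c \<noteq> 0" using assms(4) alpha_nz by auto
  then obtain m where m: "c = \<alpha>^m" using prim unfolding primitive_elem_def by blast
  have "n dvd m" using assms(3) m mem_F_pow by simp
  have "\<alpha>^a = \<alpha>^(m+b)" using assms(4) m by (simp add: power_add)
  hence "a mod M = (m+b) mod M" by (rule alpha_eq)
  hence "(a mod M) mod n = ((m+b) mod M) mod n" by simp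
  hence "a mod n = (m+b) mod n" using n_dvd_M by (simp add: mod_mod_cancel)
  also have "\<dots> = b mod n"
  proof -
    from \<open>n dvd m\<close> obtain k where k: "m = n*k" by (rule dvdE)
    have "(m+b) mod n = (n*k + b) mod n" by (simp only: k)
    also have "\<dots> = b mod n" by (rule mod_mult_self4)
    finally show ?thesis .
  qed
  finally show ?thesis using assms(1,2) by simp
qed

lemma congpoint: assumes "A mod n = B mod n" shows "\<exists>c\<in>F. \<alpha>^A = c * \<alpha>^B"
proof (cases "B \<le> A")
  case True
  hence "n dvd A - B" using assms mod_eq_dvd_iff_nat[of B A n] by simp
  hence "\<alpha>^(A-B) \<in> F" using mem_F_pow by simp
  moreover have "\<alpha>^A = \<alpha>^(A-B) * \<alpha>^B" using True by (simp flip: power_add)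
  ultimately show ?thesis by blast
next
  case False
  hence "n dvd B - A" using assms mod_eq_dvd_iff_nat[of A B n] by simp
  hence "inverse (\<alpha>^(B-A)) \<in> F" using mem_F_pow F_inv by simp
  moreover have "\<alpha>^B = \<alpha>^(B-A) * \<alpha>^A" using False by (simp flip: power_add)
  hence "\<alpha>^A = inverse (\<alpha>^(B-A)) * \<alpha>^B" using alpha_nz by simp
  ultimately show ?thesis by blast
qed

lemma card_F: "card F = q"
proof -
  have eq: "F = insert 0 ((\<lambda>s. \<alpha>^(n*s)) ` {..<q-1})"
  proof
    have "\<alpha>^(n*s) \<in> F" for s by (subst mem_F_pow) (rule dvd_triv_left)
    thus "insert 0 ((\<lambda>s. \<alpha>^(n*s)) ` {..<q-1}) \<subseteq> F" using F_0 by auto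
    show "F \<subseteq> insert 0 ((\<lambda>s. \<alpha>^(n*s)) ` {..<q-1})"
    proof
      fix x assume x: "x \<in> F"
      show "x \<in> insert 0 ((\<lambda>s. \<alpha>^(n*s)) ` {..<q-1})"
      proof (cases "x = 0")
        case False
        then obtain m where m: "x = \<alpha>^m" using prim unfolding primitive_elem_def by blast
        have "n dvd m" using x m mem_F_pow by simp
        then obtain k where k: "m = n*k" by (rule dvdE)
        have Mn: "M = n*(q-1)" by (subst M_eq) (rule mult.commute)
        have "x = \<alpha>^((n*k) mod M)" unfolding m k by (rule pow_mod)
        hence "x = \<alpha>^((n*k) mod (n*(q-1)))" by (simp only: Mn)
        also have "(n*k) mod (n*(q-1)) = n*(k mod (q-1))" by (rule mult_mod_right[symmetric])
        finally have "x = \<alpha>^(n*(k mod (q-1)))" .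
        moreover have "k mod (q-1) < q-1" using q_ge2 by simp
        ultimately show ?thesis by blast
      qed simp
    qed
  qed
  have inj: "inj_on (\<lambda>s. \<alpha>^(n*s)) {..<q-1}"
  proof
    fix s s' assume s: "s \<in> {..<q-1}" "s' \<in> {..<q-1}" "\<alpha>^(n*s) = \<alpha>^(n*s')"
    hence m1: "(n*s) mod M = (n*s') mod M" by (intro alpha_eq)
    have Mn: "M = n*(q-1)" by (subst M_eq) (rule mult.commute)
    have lt1: "n*s < n*(q-1)" by (rule mult_strict_left_mono) (use s in auto)
    have lt2: "n*s' < n*(q-1)" by (rule mult_strict_left_mono) (use s in auto)
    note lt = lt1 lt2
    from m1 have "(n*s) mod (n*(q-1)) = (n*s') mod (n*(q-1))" by (simp only: Mn)
    with lt have "n*s = n*s'" by (simp only: mod_less)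
    moreover have "n \<noteq> 0" by simp
    ultimately show "s = s'" by (metis mult_left_cancel)
  qed
  have "0 \<notin> (\<lambda>s. \<alpha>^(n*s)) ` {..<q-1}" using alpha_nz by auto
  hence "card F = Suc (card ((\<lambda>s. \<alpha>^(n*s)) ` {..<q-1}))" unfolding eq by simp
  also have "\<dots> = q" using inj q_ge2 by (simp add: card_image)
  finally show ?thesis .
qed

end


context singer
begin

definition span2 :: "'a \<Rightarrow> 'a \<Rightarrow> 'a set" where
  "span2 u v = {a*u+b*v | a b. a \<in> F \<and> b \<in> F}"

definition indep :: "'a \<Rightarrow> 'a \<Rightarrow> bool" where
  "indep u v \<longleftrightarrow> (\<forall>a\<in>F. \<forall>b\<in>F. a*u+b*v = 0 \<longrightarrow> a = 0 \<and> b = 0)"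

lemma card_span2: assumes "indep u v" shows "card (span2 u v) = q^2"
proof -
  have eq: "span2 u v = (\<lambda>(a,b). a*u+b*v) ` (F \<times> F)" unfolding span2_def by auto
  have "inj_on (\<lambda>(a,b). a*u+b*v) (F \<times> F)"
  proof (rule inj_onI, clarsimp)
    fix a b a' b' assume h: "a \<in> F" "b \<in> F" "a' \<in> F" "b' \<in> F" "a*u+b*v = a'*u+b'*v"
    hence "(a-a')*u + (b-b')*v = 0" by (simp add: algebra_simps)
    hence "a - a' = 0 \<and> b - b' = 0" using assms h F_diff unfolding indep_def by blast
    thus "a = a' \<and> b = b'" by simp
  qed
  hence "card (span2 u v) = card (F \<times> F)" unfolding eq by (rule card_image)
  also have "\<dots> = q^2" using card_F by (simp add: card_cartesian_product power2_eq_square)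
  finally show ?thesis .
qed

lemma span2_mem: "a \<in> F \<Longrightarrow> b \<in> F \<Longrightarrow> a*u+b*v \<in> span2 u v"
  unfolding span2_def by blast

lemma span2_0: "0 \<in> span2 u v" using span2_mem[OF F_0 F_0] by simp

lemma span2_scal: assumes "c \<in> F" "x \<in> span2 u v" shows "c*x \<in> span2 u v"
proof -
  obtain a b where "a \<in> F" "b \<in> F" "x = a*u+b*v" using assms(2) unfolding span2_def by blast
  hence "c*x = (c*a)*u + (c*b)*v" by (simp add: algebra_simps)
  thus ?thesis using span2_mem F_mult assms(1) \<open>a \<in> F\<close> \<open>b \<in> F\<close> by simp
qed

lemma span2_sub: assumes "x \<in> span2 u v" "y \<in> span2 u v" shows "span2 x y \<subseteq> span2 u v"
proof
  fix z assume "z \<in> span2 x y"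
  then obtain c d where cd: "c \<in> F" "d \<in> F" "z = c*x+d*y" unfolding span2_def by blast
  obtain a1 b1 where 1: "a1 \<in> F" "b1 \<in> F" "x = a1*u+b1*v" using assms(1) unfolding span2_def by blast
  obtain a2 b2 where 2: "a2 \<in> F" "b2 \<in> F" "y = a2*u+b2*v" using assms(2) unfolding span2_def by blast
  have "z = (c*a1+d*a2)*u + (c*b1+d*b2)*v" using cd 1 2 by (simp add: algebra_simps)
  thus "z \<in> span2 u v" using span2_mem F_mult F_add cd 1 2 by simp
qed

lemma pow_card1: "x^(q^3) = (x::'a)"
proof (cases "x = 0")
  case True thus ?thesis using q_pos by simp
next
  case False
  have "q^3 = Suc M" using q_pos by simp
  hence "x^(q^3) = x^(Suc M)" by metis
  also have "\<dots> = x^M * x" by (rule power_Suc2)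
  finally show ?thesis using pow_card[OF False] by simp
qed

lemma quad: assumes "u \<noteq> 0" "v \<noteq> 0" "\<gamma>*u \<in> span2 u v" "\<gamma>*v \<in> span2 u v" shows "\<gamma> \<in> F"
proof -
  obtain a1 b1 where 1: "a1 \<in> F" "b1 \<in> F" "\<gamma>*u = a1*u+b1*v" using assms(3) unfolding span2_def by blast
  obtain a2 b2 where 2: "a2 \<in> F" "b2 \<in> F" "\<gamma>*v = a2*u+b2*v" using assms(4) unfolding span2_def by blast
  have e1: "(\<gamma> - a1)*u = b1*v" using 1 by (simp add: algebra_simps)
  have e2: "(\<gamma> - b2)*v = a2*u" using 2 by (simp add: algebra_simps)
  have "((\<gamma> - a1)*(\<gamma> - b2) - a2*b1)*(u*v) = ((\<gamma> - a1)*u)*((\<gamma> - b2)*v) - a2*b1*(u*v)"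
    by (simp add: algebra_simps)
  also have "\<dots> = 0" unfolding e1 e2 by (simp add: algebra_simps)
  finally have "(\<gamma> - a1)*(\<gamma> - b2) - a2*b1 = 0" using assms(1,2) by simp
  define s where "s = -(a1+b2)"
  define r where "r = a1*b2 - a2*b1"
  have sF: "s \<in> F" unfolding s_def by (intro F_neg F_add 1(1) 2(2))
  have rF: "r \<in> F" unfolding r_def by (intro F_mult F_diff 1(1,2) 2(1,2))
  have eq: "\<gamma>*\<gamma> + s*\<gamma> + r = 0"
    using \<open>(\<gamma> - a1)*(\<gamma> - b2) - a2*b1 = 0\<close> unfolding s_def r_def by (simp add: algebra_simps)
  show ?thesis
  proof (rule ccontr)
    assume nF: "\<gamma> \<notin> F"
    define g where "g = \<gamma>^q"
    have gne: "g - \<gamma> \<noteq> 0" using nF unfolding g_def F_iff by simp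
    have "(\<gamma>*\<gamma> + s*\<gamma> + r)^q = g*g + s*g + r"
      using sF rF unfolding g_def by (simp add: frob power_mult_distrib F_iff)
    hence geq: "g*g + s*g + r = 0" using eq q_pos by (simp add: power_0_left)
    have "(g - \<gamma>)*(g + \<gamma> + s) = (g*g + s*g + r) - (\<gamma>*\<gamma> + s*\<gamma> + r)" by (simp add: algebra_simps)
    also have "\<dots> = 0" using eq geq by simp
    finally have "g + \<gamma> + s = 0" using gne by simp
    hence g2: "g = -\<gamma> + -s" by (simp add: algebra_simps eq_neg_iff_add_eq_0)
    have "\<gamma>^(q^2) = g^q" unfolding g_def by (simp add: power2_eq_square power_mult)
    also have "\<dots> = (-\<gamma> + -s)^q" using g2 by simp
    also have "\<dots> = (-\<gamma>)^q + (-s)^q" by (rule frob)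
    also have "\<dots> = -g + -s" using sF by (simp add: neg_pow F_iff g_def)
    also have "\<dots> = \<gamma>" using g2 by simp
    finally have "\<gamma>^(q^2) = \<gamma>" .
    hence "\<gamma>^(q^2*q) = g" unfolding g_def by (simp add: power_mult)
    moreover have "q^2*q = q^3" by (simp add: power2_eq_square power3_eq_cube)
    ultimately have "g = \<gamma>" using pow_card1 by simp
    thus False using gne by simp
  qed
qed

end


locale singer_line = singer +
  fixes i j :: nat
  assumes i_lt: "i < n" and j_lt: "j < n" and ij: "i \<noteq> j"
begin

abbreviation V where "V \<equiv> span2 (\<alpha>^i) (\<alpha>^j)"
definition LL where "LL = {k. k < n \<and> \<alpha>^k \<in> V}"

lemma pow_indep: assumes "k1 < n" "k2 < n" "k1 \<noteq> k2" shows "indep (\<alpha>^k1) (\<alpha>^k2)"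
  unfolding indep_def
proof (intro ballI impI)
  fix a b assume ab: "a \<in> F" "b \<in> F" "a*\<alpha>^k1 + b*\<alpha>^k2 = 0"
  have "b = 0"
  proof (rule ccontr)
    assume "b \<noteq> 0"
    hence "\<alpha>^k2 = (-a/b) * \<alpha>^k1" using ab(3) by (simp add: field_simps eq_neg_iff_add_eq_0 add.commute)
    hence "k2 = k1" using samepoint assms F_div F_neg ab by blast
    thus False using assms by simp
  qed
  moreover hence "a = 0" using ab alpha_nz by simp
  ultimately show "a = 0 \<and> b = 0" by simp
qed

lemma card_V: "card V = q^2" by (rule card_span2[OF pow_indep[OF i_lt j_lt ij]])

lemma card_LL: "card LL = q + 1"
proof -
  define g where "g = (\<lambda>(k::nat, c::'a). c * \<alpha>^k)"
  have inj: "inj_on g (LL \<times> (F - {0}))"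
  proof (rule inj_onI)
    fix x y assume hx: "x \<in> LL \<times> (F - {0})" and hy: "y \<in> LL \<times> (F - {0})" and gxy: "g x = g y"
    obtain k c where x: "x = (k, c)" by (cases x)
    obtain k' c' where y: "y = (k', c')" by (cases y)
    have h: "k \<in> LL" "c \<in> F" "c \<noteq> 0" "k' \<in> LL" "c' \<in> F" "c' \<noteq> 0" "c*\<alpha>^k = c'*\<alpha>^k'"
      using hx hy gxy unfolding x y g_def by auto
    hence "\<alpha>^k = (c'/c)*\<alpha>^k'" by (simp add: field_simps)
    hence "k = k'" using samepoint h F_div unfolding LL_def by blast
    thus "x = y" using h alpha_nz unfolding x y by simp
  qed
  have img: "g ` (LL \<times> (F - {0})) = V - {0}"
  proof
    show "g ` (LL \<times> (F - {0})) \<subseteq> V - {0}"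
      using span2_scal alpha_nz unfolding g_def LL_def by auto
    show "V - {0} \<subseteq> g ` (LL \<times> (F - {0}))"
    proof
      fix v assume v: "v \<in> V - {0}"
      then obtain m where m: "v = \<alpha>^m" using prim unfolding primitive_elem_def by blast
      define c where "c = \<alpha>^(n*(m div n))"
      have cF: "c \<in> F" unfolding c_def by (subst mem_F_pow) (rule dvd_triv_left)
      have cnz: "c \<noteq> 0" unfolding c_def using alpha_nz by simp
      have "v = \<alpha>^(n*(m div n) + m mod n)" unfolding m by (simp only: mult_div_mod_eq)
      hence "v = c * \<alpha>^(m mod n)" unfolding c_def by (simp only: power_add)
      hence "\<alpha>^(m mod n) = inverse c * v" using cnz by simp
      hence "\<alpha>^(m mod n) \<in> V" using span2_scal F_inv cF v by simp
      hence "m mod n \<in> LL" unfolding LL_def by simp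
      thus "v \<in> g ` (LL \<times> (F - {0}))" using \<open>v = c * \<alpha>^(m mod n)\<close> cF cnz unfolding g_def by force
    qed
  qed
  have "card (LL \<times> (F - {0})) = card (V - {0})" using card_image[OF inj] img by simp
  moreover have "card (V - {0}) = q^2 - 1" using card_V span2_0 by (simp add: card_Diff_singleton)
  moreover have "card (LL \<times> (F - {0})) = card LL * (q - 1)"
    using card_F F_0 by (simp add: card_cartesian_product card_Diff_singleton)
  ultimately have "card LL * (q - 1) = (q+1)*(q-1)"
    by (simp add: power2_eq_square algebra_simps)
  moreover have "q - 1 \<noteq> 0" using q_ge2 by simp
  ultimately show ?thesis by (metis mult_right_cancel)
qed

lemma LL_inj:
  assumes "k1 \<in> LL" "k1' \<in> LL" "k2 \<in> LL" "k2' \<in> LL" "k1 \<noteq> k1'"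
    "(k1 + k2') mod n = (k2 + k1') mod n"
  shows "k1 = k2 \<and> k1' = k2'"
proof (cases "k1 = k2")
  case True
  hence "[k1 + k2' = k1 + k1'] (mod n)" using assms(6) by (simp add: cong_def)
  hence "[k2' = k1'] (mod n)" by (simp add: cong_add_lcancel_nat)
  thus ?thesis using True assms(2,4) unfolding LL_def by (simp add: cong_def)
next
  case False
  have lt: "k1 < n" "k2 < n" "k1' < n" "k2' < n" and inV: "\<alpha>^k1 \<in> V" "\<alpha>^k2 \<in> V" "\<alpha>^k1' \<in> V" "\<alpha>^k2' \<in> V"
    using assms(1-4) unfolding LL_def by auto
  have ind: "indep (\<alpha>^k1) (\<alpha>^k2)" by (rule pow_indep) (use lt False in auto)
  have sub: "span2 (\<alpha>^k1) (\<alpha>^k2) \<subseteq> V" by (rule span2_sub[OF inV(1,2)])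
  have Veq: "span2 (\<alpha>^k1) (\<alpha>^k2) = V"
    by (rule card_subset_eq[OF _ sub]) (simp_all add: card_V card_span2[OF ind])
  define \<gamma> where "\<gamma> = \<alpha>^k1' / \<alpha>^k1"
  have g1: "\<gamma> * \<alpha>^k1 = \<alpha>^k1'" unfolding \<gamma>_def using alpha_nz by simp
  obtain c where c: "c \<in> F" "\<alpha>^(k2 + k1') = c * \<alpha>^(k1 + k2')"
    using congpoint[of "k2 + k1'" "k1 + k2'"] assms(6) by metis
  have "\<gamma> * \<alpha>^k2 = \<alpha>^(k2 + k1') / \<alpha>^k1" unfolding \<gamma>_def by (simp add: power_add)
  also have "\<dots> = c * \<alpha>^k2'" unfolding c(2) using alpha_nz by (simp add: power_add)
  finally have g2: "\<gamma> * \<alpha>^k2 = c * \<alpha>^k2'" .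
  have "\<gamma> \<in> F"
    by (rule quad[of "\<alpha>^k1" "\<alpha>^k2"]) (use alpha_nz g1 g2 inV c span2_scal Veq in auto)
  hence "k1' = k1" using samepoint[of k1' k1 \<gamma>] lt g1 by simp
  thus ?thesis using assms(5) by simp
qed

end


lemma count_pairs:
  fixes L :: "nat set" and n t c :: nat
  assumes Lsub: "L \<subseteq> {..<n}" and cardL: "card L = c" and cc: "c*c - c = n - 1" and npos: "n > 0"
    and inj: "\<And>k1 k1' k2 k2'. k1\<in>L \<Longrightarrow> k1'\<in>L \<Longrightarrow> k2\<in>L \<Longrightarrow> k2'\<in>L \<Longrightarrow> k1\<noteq>k1' \<Longrightarrow>
               (k1+k2') mod n = (k2+k1') mod n \<Longrightarrow> k1=k2 \<and> k1'=k2'"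
    and tpos: "t > 0" and tdvd: "t dvd n"
  shows "(\<Sum>u<t. (card {k\<in>L. k mod t = u})^2) = c + (n div t - 1)"
proof -
  have finL: "finite L" using Lsub finite_subset by blast
  define A where "A u = {k\<in>L. k mod t = u}" for u
  have finA: "finite (A u)" for u unfolding A_def using finL by simp
  have "(\<Sum>u<t. (card (A u))^2) = (\<Sum>u<t. card (A u \<times> A u))"
    by (simp add: card_cartesian_product power2_eq_square)
  also have "\<dots> = card (\<Union>u<t. A u \<times> A u)"
    by (rule card_UN_disjoint[symmetric]) (auto simp: finA, auto simp: A_def)
  also have "(\<Union>u<t. A u \<times> A u) = {(k,k'). k\<in>L \<and> k'\<in>L \<and> k mod t = k' mod t}"
    using tpos by (auto simp: A_def)
  also have "\<dots> = (\<lambda>k. (k,k)) ` L \<union> {(k,k'). k\<in>L \<and> k'\<in>L \<and> k \<noteq> k' \<and> k mod t = k' mod t}"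
    by auto
  also have "card \<dots> = card ((\<lambda>k. (k,k)) ` L) + card {(k,k'). k\<in>L \<and> k'\<in>L \<and> k \<noteq> k' \<and> k mod t = k' mod t}"
    by (rule card_Un_disjoint) (auto intro: finite_subset[of _ "L \<times> L"] simp: finL)
  also have "card ((\<lambda>k. (k,k)) ` L) = c" using cardL by (simp add: card_image inj_on_def)
  finally have S: "(\<Sum>u<t. (card (A u))^2) = c + card {(k,k'). k\<in>L \<and> k'\<in>L \<and> k \<noteq> k' \<and> k mod t = k' mod t}" .
  define Off where "Off = {(k,k'). k\<in>L \<and> k'\<in>L \<and> k \<noteq> k'}"
  define f where "f = (\<lambda>(k::nat,k'::nat). (k + n - k') mod n)"
  have finOff: "finite Off" unfolding Off_def by (rule finite_subset[of _ "L \<times> L"]) (auto simp: finL)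
  have "L \<times> L = (\<lambda>k. (k,k)) ` L \<union> Off" unfolding Off_def by auto
  moreover have "card ((\<lambda>k. (k,k)) ` L \<union> Off) = card ((\<lambda>k. (k,k)) ` L) + card Off"
    by (rule card_Un_disjoint) (use finOff finL in \<open>auto simp: Off_def\<close>)
  ultimately have "card (L \<times> L) = card ((\<lambda>k. (k,k)) ` L) + card Off" by simp
  hence "c*c = c + card Off" using cardL by (simp add: card_cartesian_product card_image inj_on_def)
  hence cardOff: "card Off = n - 1" using cc by simp
  have injf: "inj_on f Off"
  proof (rule inj_onI)
    fix x y assume hx: "x \<in> Off" and hy: "y \<in> Off" and fxy: "f x = f y"
    obtain k1 k1' where x: "x = (k1,k1')" by (cases x)
    obtain k2 k2' where y: "y = (k2,k2')" by (cases y)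
    have h: "k1\<in>L" "k1'\<in>L" "k2\<in>L" "k2'\<in>L" "k1\<noteq>k1'"
      using hx hy unfolding x y Off_def by auto
    have lt: "k1' < n" "k2' < n" using h Lsub by auto
    have "[k1+n-k1' = k2+n-k2'] (mod n)" using fxy unfolding x y f_def cong_def by simp
    hence "[k1+n-k1' + (k1'+k2') = k2+n-k2' + (k1'+k2')] (mod n)" by (rule cong_add) (rule cong_refl)
    moreover have "k1+n-k1' + (k1'+k2') = (k1+k2') + n" using lt by simp
    moreover have "k2+n-k2' + (k1'+k2') = (k2+k1') + n" using lt by simp
    ultimately have "[(k1+k2') + n = (k2+k1') + n] (mod n)" by simp
    hence "[k1+k2' = k2+k1'] (mod n)" by (simp add: cong_add_rcancel_nat)
    hence "k1 = k2 \<and> k1' = k2'" using inj h unfolding cong_def by blast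
    thus "x = y" unfolding x y by simp
  qed
  have fsub: "f ` Off \<subseteq> {1..<n}"
  proof
    fix y assume "y \<in> f ` Off"
    then obtain k k' where h: "k\<in>L" "k'\<in>L" "k\<noteq>k'" "y = (k + n - k') mod n"
      unfolding Off_def f_def by auto
    have lt: "k < n" "k' < n" using h Lsub by auto
    have "y \<noteq> 0"
    proof (cases "k' < k")
      case True
      hence "k + n - k' = (k - k') + n" by simp
      hence "y = ((k - k') + n) mod n" using h(4) by simp
      also have "\<dots> = k - k'" using lt by simp
      finally have "y = k - k'" .
      thus ?thesis using True by simp
    next
      case False
      hence "k + n - k' < n" "k + n - k' > 0" using h lt by auto
      thus ?thesis using h by simp
    qed
    moreover have "y < n" using h npos by simp
    ultimately show "y \<in> {1..<n}" by simp
  qed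
  have fimg: "f ` Off = {1..<n}"
    by (rule card_subset_eq[OF _ fsub]) (simp_all add: card_image[OF injf] cardOff)
  have key: "k mod t = k' mod t \<longleftrightarrow> t dvd f (k,k')" if "k' < n" for k k'
  proof -
    obtain r where r: "n = t*r" using tdvd by (auto elim: dvdE)
    have "t dvd f (k,k') \<longleftrightarrow> t dvd (k + n - k')" unfolding f_def using tdvd by (simp add: dvd_mod_iff)
    also have "\<dots> \<longleftrightarrow> (k+n) mod t = k' mod t" using that by (intro mod_eq_dvd_iff_nat[symmetric]) simp
    also have "(k+n) mod t = k mod t" unfolding r by simp
    finally show ?thesis by simp
  qed
  have Deq: "{(k,k'). k\<in>L \<and> k'\<in>L \<and> k \<noteq> k' \<and> k mod t = k' mod t} = {x\<in>Off. t dvd f x}"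
    unfolding Off_def using key Lsub by auto
  have "card {x\<in>Off. t dvd f x} = card (f ` {x\<in>Off. t dvd f x})"
    by (rule card_image[symmetric]) (rule inj_on_subset[OF injf], auto)
  also have "f ` {x\<in>Off. t dvd f x} = {d\<in>{1..<n}. t dvd d}" using fimg by auto
  also have "{d\<in>{1..<n}. t dvd d} = (\<lambda>s. t*s) ` {1..<n div t}"
  proof -
    obtain r where r: "n = t*r" using tdvd by (auto elim: dvdE)
    have "{d\<in>{1..<n}. t dvd d} = (\<lambda>s. t*s) ` {1..<r}"
    proof
      show "{d\<in>{1..<n}. t dvd d} \<subseteq> (\<lambda>s. t*s) ` {1..<r}"
      proof
        fix d assume "d \<in> {d\<in>{1..<n}. t dvd d}"
        then obtain s where "d = t*s" "1 \<le> t*s" "t*s < t*r" using r by (auto elim: dvdE)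
        hence "d = t*s" "1 \<le> s" "s < r" using tpos by (auto simp: Suc_le_eq)
        thus "d \<in> (\<lambda>s. t*s) ` {1..<r}" by auto
      qed
      show "(\<lambda>s. t*s) ` {1..<r} \<subseteq> {d\<in>{1..<n}. t dvd d}"
        using r tpos by auto
    qed
    thus ?thesis using r tpos by simp
  qed
  also have "card \<dots> = n div t - 1" using tpos by (simp add: card_image inj_on_def)
  finally have "card {x\<in>Off. t dvd f x} = n div t - 1" .
  thus ?thesis using S Deq unfolding A_def by simp
qed


theorem lemma2:
  fixes p h q t :: nat and \<alpha> :: "'a::{field,finite}" and l0 :: "nat set"
    and w :: "nat \<Rightarrow> nat"
  assumes "prime p" and "h \<ge> 1" and "q = p ^ h"
    and "card (UNIV :: 'a set) = q ^ 3"
    and "primitive_elem \<alpha>"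
    and "is_line q \<alpha> l0"
    and "tau_idx p q ` l0 = l0"
    and "t > 0" and "t dvd q^2+q+1"
    and "\<And>u. w u = card {k \<in> l0. k mod t = u}"
  shows "real (\<Sum>i<t. (w i)^2) = real (q^2 + (t+1)*q + 1) / real t"
proof -
  interpret singer p h q \<alpha> using assms(1-5) by unfold_locales auto
  obtain i j where ij: "i < q^2+q+1" "j < q^2+q+1" "proj_point q \<alpha> i \<noteq> proj_point q \<alpha> j"
    and l0: "l0 = {k. k < q^2+q+1 \<and> (\<exists>a \<in> F. \<exists>b \<in> F. \<alpha> ^ k = a * \<alpha> ^ i + b * \<alpha> ^ j)}"
    using assms(6) unfolding is_line_def by blast
  have "i \<noteq> j" using ij by auto
  interpret singer_line p h q \<alpha> i j by unfold_locales (use ij \<open>i \<noteq> j\<close> in auto)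
  have l0L: "l0 = LL" unfolding l0 LL_def span2_def by auto
  have cc: "(q+1)*(q+1) - (q+1) = (q^2+q+1) - 1" by (simp add: power2_eq_square algebra_simps)
  have cnt: "(\<Sum>u<t. (card {k\<in>l0. k mod t = u})^2) = (q+1) + ((q^2+q+1) div t - 1)"
    unfolding l0L
  proof (rule count_pairs[OF _ card_LL cc])
    show "LL \<subseteq> {..<q^2+q+1}" unfolding LL_def by auto
    show "q^2+q+1 > 0" by simp
    show "t > 0" "t dvd q^2+q+1" using assms(8,9) by auto
    show "\<And>k1 k1' k2 k2'. k1\<in>LL \<Longrightarrow> k1'\<in>LL \<Longrightarrow> k2\<in>LL \<Longrightarrow> k2'\<in>LL \<Longrightarrow> k1\<noteq>k1' \<Longrightarrow>
       (k1+k2') mod (q^2+q+1) = (k2+k1') mod (q^2+q+1) \<Longrightarrow> k1=k2 \<and> k1'=k2'"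
      using LL_inj by blast
  qed
  have sw: "(\<Sum>i<t. (w i)^2) = (\<Sum>u<t. (card {k\<in>l0. k mod t = u})^2)" using assms(10) by simp
  obtain r where r: "q^2+q+1 = t*r" using assms(9) by (auto elim: dvdE)
  have rpos: "r > 0" using r by (cases r) auto
  have rdiv: "(q^2+q+1) div t = r" using r assms(8) by simp
  have "(\<Sum>i<t. (w i)^2) = q + r" using sw cnt rdiv rpos by simp
  moreover have "q^2 + (t+1)*q + 1 = t*(q + r)" using r by (simp add: algebra_simps)
  ultimately show ?thesis using assms(8) by simp
qed


end
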